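(* Let $g:\mathbb{R}^N\to\mathbb{R}$ and a family of random functions $g(\theta,\xi)$ differentiable in $\theta$ be given. Given $\theta_1,v_0\in\mathbb{R}^N$, $\alpha$ and step sizes $\epsilon_n$, define for $n\ge1$: $v_n=\alpha v_{n-1}+\epsilon_n\nabla_\theta g(\theta_n,\xi_n)$, $\theta_{n+1}=\theta_n-v_n$. Assume: (i) the $\xi_n$ are mutually independent and independent of $\theta_1,v_0$, and $g(x)=\mathbb{E}_{\xi_n}(g(x,\xi_n))$ for all $x$ and $n$; (ii) $g$ is non-negative and continuously differentiable; $J=\{\theta:\nabla g(\theta)=0\}\ne\emptyset$; $\|\nabla g(x)-\nabla g(y)\|\le c\|x-y\|$ for some $c>0$ and all $x,y$; and there is $M>0$ with $\mathbb{E}_{\xi_n}\big(\|\nabla_\theta g(\theta)-\nabla_\theta g(\theta,\xi_n)\|^2\big)\le M(1+g(\theta))$ for all $\theta$ and $n$; (iii) $\alpha\in[0,1)$, and $\epsilon_n>0$ decreases monotonically to $0$ with $\sum\epsilon_n=\infty$, $\sum\epsilon_n^2<\infty$. Then for all $\theta_1\in\mathbb{R}^N$ and $v_0\in\mathbb{R}^N$ there is a scalar $T(\theta_1,v_0)$ such that $\mathbb{E}\big(g(\theta_n)\big)<T(\theta_1,v_0)$ for all $n\ge1$.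
   Context: $\|\cdot\|$ is the Euclidean norm; $\mathbb{E}_{\xi_n}$ denotes expectation with respect to $\xi_n$ only. *)

theory Defs
  imports "HOL-Probability.Probability"
begin

text \<open>Heavy-ball / momentum SGD iterates.  hb_state ... n omega = (theta_(n+1), v_n),
  so hb_state ... 0 omega = (theta_1, v_0) and for n >= 1:
  v_n = alpha v_(n-1) + eps_n * DG(theta_n, xi_n),  theta_(n+1) = theta_n - v_n.\<close>

fun hb_state :: "('n::finite) itself \<Rightarrow> (real^'n \<Rightarrow> 'b \<Rightarrow> real^'n) \<Rightarrow> real \<Rightarrow> (nat \<Rightarrow> real)
    \<Rightarrow> (nat \<Rightarrow> 'a \<Rightarrow> 'b) \<Rightarrow> real^'n \<Rightarrow> real^'n \<Rightarrow> nat \<Rightarrow> 'a \<Rightarrow> (real^'n) \<times> (real^'n)" where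
  "hb_state _ DG \<alpha> \<epsilon> \<xi> \<theta>1 v0 0 \<omega> = (\<theta>1, v0)"
| "hb_state t DG \<alpha> \<epsilon> \<xi> \<theta>1 v0 (Suc n) \<omega> =
     (let (\<theta>, v) = hb_state t DG \<alpha> \<epsilon> \<xi> \<theta>1 v0 n \<omega>;
          v' = \<alpha> *\<^sub>R v + \<epsilon> (Suc n) *\<^sub>R DG \<theta> (\<xi> (Suc n) \<omega>)
      in (\<theta> - v', v'))"

definition hb_theta :: "(real^'n::finite \<Rightarrow> 'b \<Rightarrow> real^'n) \<Rightarrow> real \<Rightarrow> (nat \<Rightarrow> real)
    \<Rightarrow> (nat \<Rightarrow> 'a \<Rightarrow> 'b) \<Rightarrow> real^'n \<Rightarrow> real^'n \<Rightarrow> nat \<Rightarrow> 'a \<Rightarrow> real^'n" where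
  "hb_theta DG \<alpha> \<epsilon> \<xi> \<theta>1 v0 n \<omega> = fst (hb_state TYPE('n) DG \<alpha> \<epsilon> \<xi> \<theta>1 v0 (n - 1) \<omega>)"

end

theory Submission
  imports Defs
begin

lemma abs_le_1_sq: fixes y :: real shows "\<bar>y\<bar> \<le> 1 + y^2"
proof (cases "\<bar>y\<bar> \<le> 1")
  case True thus ?thesis using zero_le_power2[of y] by linarith
next
  case False then have "\<bar>y\<bar> * 1 \<le> \<bar>y\<bar> * \<bar>y\<bar>" by (intro mult_left_mono) auto
  thus ?thesis by (simp add: power2_eq_square)
qed

lemma prod_le_half_sq: fixes a b :: real shows "a * b \<le> a^2/2 + b^2/2"
proof -
  have "0 \<le> (a - b)^2" by simp
  then have "0 \<le> a^2 - 2*(a*b) + b^2" by (simp add: power2_diff mult.assoc)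
  thus ?thesis by linarith
qed

lemma sum_sq_le: fixes a b :: real shows "(a + b)^2 \<le> 2*a^2 + 2*b^2"
proof -
  have "0 \<le> (a - b)^2" by simp
  then have "0 \<le> a^2 - 2*(a*b) + b^2" by (simp add: power2_diff mult.assoc)
  moreover have "(a + b)^2 = a^2 + 2*(a*b) + b^2" by (simp add: power2_sum mult.assoc)
  ultimately show ?thesis by linarith
qed

lemma fsq:
  fixes f f' :: "real \<Rightarrow> real" and h :: real
  assumes h: "0 < h"
    and der: "\<And>t. (f has_real_derivative f' t) (at t)"
    and meas: "f' \<in> borel_measurable borel"
  shows "ennreal (((f h - f 0)/h)^2) \<le> ennreal (1/h) * (\<integral>\<^sup>+t. ennreal (indicator {0..h} t * (f' t)^2) \<partial>lborel)"
proof (cases "(\<integral>\<^sup>+t. ennreal (indicator {0..h} t * (f' t)^2) \<partial>lborel) = \<infinity>")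
  case True then show ?thesis using h by (simp add: ennreal_mult_top)
next
  case False
  then obtain r where r: "(\<integral>\<^sup>+t. ennreal (indicator {0..h} t * (f' t)^2) \<partial>lborel) = ennreal r" "0 \<le> r"
    by (cases "(\<integral>\<^sup>+t. ennreal (indicator {0..h} t * (f' t)^2) \<partial>lborel)" rule: ennreal_cases) auto
  have "((\<lambda>t. indicator {0..h} t * (f' t)^2) has_integral r) UNIV"
    by (rule nn_integral_has_integral) (use r meas in auto)
  hence I2: "((\<lambda>t. (f' t)^2) has_integral r) {0..h}"
  proof -
    have eq: "(\<lambda>t. indicator {0..h} t * (f' t)^2) = (\<lambda>x. if x \<in> {0..h} then (f' x)^2 else 0)"
      by (auto simp: indicator_def fun_eq_iff)
    show ?thesis using \<open>((\<lambda>t. indicator {0..h} t * (f' t)^2) has_integral r) UNIV\<close>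
      unfolding eq has_integral_restrict_UNIV .
  qed
  have I1: "(f' has_integral (f h - f 0)) {0..h}"
  proof -
    have "(f has_vector_derivative f' x) (at x within {0..h})" for x
    proof -
      have "(f has_vector_derivative f' x) (at x)"
        using der[of x] by (simp add: has_real_derivative_iff_has_vector_derivative)
      then show ?thesis by (rule has_vector_derivative_at_within)
    qed
    then show ?thesis using h by (intro fundamental_theorem_of_calculus) auto
  qed
  define m where "m = (f h - f 0)/h"
  have I3: "((\<lambda>t. (f' t)^2 - 2*m * f' t + m^2) has_integral (r - 2*m*(f h - f 0) + m^2 * h)) {0..h}"
  proof -
    have C: "((\<lambda>x. m^2) has_integral m^2 * h) {0..h}"
      using has_integral_const_real[of "m^2" 0 h] h by (simp add: mult.commute)
    show ?thesis by (intro has_integral_add has_integral_diff I2 has_integral_mult_right I1 C)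
  qed
  have "0 \<le> r - 2*m*(f h - f 0) + m^2 * h"
  proof (rule has_integral_nonneg[OF I3])
    fix t have "(f' t)^2 - 2*m * f' t + m^2 = (f' t - m)^2" by (simp add: power2_diff)
    then show "0 \<le> (f' t)^2 - 2*m * f' t + m^2" by simp
  qed
  moreover have "f h - f 0 = m * h" using h by (simp add: m_def)
  ultimately have "m^2 * h \<le> r" by (simp add: power2_eq_square mult_ac)
  hence "m^2 \<le> r / h" using h by (simp add: field_simps)
  hence "ennreal (m^2) \<le> ennreal (1/h) * ennreal r"
    using h by (simp add: ennreal_mult'[symmetric] ennreal_leI)
  then show ?thesis by (simp add: r m_def)
qed

lemma line_deriv:
  fixes f :: "'v::real_inner \<Rightarrow> real"
  assumes "GDERIV f (x + t *\<^sub>R e) :> D"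
  shows "((\<lambda>t. f (x + t *\<^sub>R e)) has_real_derivative inner e D) (at t)"
proof -
  have l: "((\<lambda>t. x + t *\<^sub>R e) has_derivative (\<lambda>t. t *\<^sub>R e)) (at t)"
    by (auto intro!: derivative_eq_intros)
  have "((\<lambda>t. f (x + t *\<^sub>R e)) has_derivative (\<lambda>h. inner (h *\<^sub>R e) D)) (at t)"
    using has_derivative_compose[OF l assms[unfolded gderiv_def]] by simp
  then show ?thesis unfolding has_field_derivative_def
    by (simp add: mult.commute[of _ "inner e D"] fun_eq_iff)
qed

locale hb =
  fixes P :: "'a measure" and S :: "'b measure"
    and \<xi> :: "nat \<Rightarrow> 'a \<Rightarrow> 'b"
    and g :: "real^'n::finite \<Rightarrow> real" and Dg :: "real^'n \<Rightarrow> real^'n"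
    and G :: "real^'n \<Rightarrow> 'b \<Rightarrow> real" and DG :: "real^'n \<Rightarrow> 'b \<Rightarrow> real^'n"
    and \<alpha> :: real and \<epsilon> :: "nat \<Rightarrow> real" and c K :: real
  assumes prob: "prob_space P"
    and xi_rv: "\<And>n. n \<ge> 1 \<Longrightarrow> \<xi> n \<in> measurable P S"
    and xi_indep: "prob_space.indep_vars P (\<lambda>_. S) \<xi> {1..}"
    and G_meas: "\<And>x. (\<lambda>s. G x s) \<in> borel_measurable S"
    and DG_meas: "(\<lambda>(x, s). DG x s) \<in> borel_measurable (borel \<Otimes>\<^sub>M S)"
    and G_diff: "\<And>x s. s \<in> space S \<Longrightarrow> GDERIV (\<lambda>y. G y s) x :> DG x s"
    and G_integrable: "\<And>x n. n \<ge> 1 \<Longrightarrow> integrable P (\<lambda>\<omega>. G x (\<xi> n \<omega>))"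
    and unbiased: "\<And>x n. n \<ge> 1 \<Longrightarrow> g x = (\<integral>\<omega>. G x (\<xi> n \<omega>) \<partial>P)"
    and g_nonneg: "\<And>x. g x \<ge> 0"
    and g_grad: "\<And>x. GDERIV g x :> Dg x"
    and Dg_cont: "continuous_on UNIV Dg"
    and J_nonempty: "{\<theta>. Dg \<theta> = 0} \<noteq> {}"
    and c_pos: "c > 0"
    and Lipschitz: "\<And>x y. norm (Dg x - Dg y) \<le> c * norm (x - y)"
    and K_pos: "K > 0"
    and variance: "\<And>\<theta> n. n \<ge> 1 \<Longrightarrow>
        (\<integral>\<^sup>+ \<omega>. ennreal ((norm (Dg \<theta> - DG \<theta> (\<xi> n \<omega>)))\<^sup>2) \<partial>P) \<le> ennreal (K * (1 + g \<theta>))"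
    and alpha: "0 \<le> \<alpha>" "\<alpha> < 1"
    and eps_pos: "\<And>n. n \<ge> 1 \<Longrightarrow> \<epsilon> n > 0"
    and eps_mono: "\<And>m n. 1 \<le> m \<Longrightarrow> m \<le> n \<Longrightarrow> \<epsilon> n \<le> \<epsilon> m"
    and eps_lim: "\<epsilon> \<longlonglongrightarrow> 0"
    and eps_div: "\<not> summable \<epsilon>"
    and eps_sq: "summable (\<lambda>n. (\<epsilon> n)\<^sup>2)"
begin

lemma g_line: "((\<lambda>t. g (x + t *\<^sub>R e)) has_real_derivative inner e (Dg (x + t *\<^sub>R e))) (at t)"
  by (rule line_deriv[OF g_grad])

lemma descent: "g y \<le> g x + inner (Dg x) (y - x) + c * (norm (y - x))^2"
proof -
  define e where "e = y - x"
  obtain z where z: "0 < z" "z < 1" "g (x + 1 *\<^sub>R e) - g (x + 0 *\<^sub>R e) = (1 - 0) * inner e (Dg (x + z *\<^sub>R e))"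
    using MVT2[of 0 1 "\<lambda>t. g (x + t *\<^sub>R e)" "\<lambda>t. inner e (Dg (x + t *\<^sub>R e))"] g_line by auto
  have "inner e (Dg (x + z *\<^sub>R e)) - inner e (Dg x) = inner e (Dg (x + z *\<^sub>R e) - Dg x)"
    by (simp add: inner_diff_right)
  also have "\<dots> \<le> norm e * norm (Dg (x + z *\<^sub>R e) - Dg x)"
    by (rule norm_cauchy_schwarz)
  also have "\<dots> \<le> norm e * (c * norm (z *\<^sub>R e))"
    using Lipschitz[of "x + z *\<^sub>R e" x] by (intro mult_left_mono) auto
  also have "\<dots> \<le> norm e * (c * norm e)"
    using z c_pos by (intro mult_left_mono) (auto simp: mult_le_cancel_left1 intro!: mult_left_le_one_le)
  finally have "inner e (Dg (x + z *\<^sub>R e)) \<le> inner e (Dg x) + c * (norm e)^2"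
    by (simp add: power2_eq_square algebra_simps)
  with z show ?thesis by (simp add: e_def inner_commute)
qed

lemma grad_bound: "(norm (Dg x))^2 \<le> 4 * c * g x"
proof -
  have "0 \<le> g (x - (1/(2*c)) *\<^sub>R Dg x)" by (rule g_nonneg)
  also have "\<dots> \<le> g x + inner (Dg x) (- (1/(2*c)) *\<^sub>R Dg x) + c * (norm (- (1/(2*c)) *\<^sub>R Dg x))^2"
    using descent[of "x - (1/(2*c)) *\<^sub>R Dg x" x] by simp
  also have "\<dots> = g x - (norm (Dg x))^2 / (4*c)"
    using c_pos by (simp add: power2_eq_square field_simps inner_commute power_mult_distrib
        flip: power2_norm_eq_inner)
  finally show ?thesis using c_pos by (simp add: field_simps)
qed

lemma g_shift: "g (x + w) \<le> (1 + 2*c) * g x + (1/2 + c) * (norm w)^2"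
proof -
  have "g (x + w) \<le> g x + inner (Dg x) w + c * (norm w)^2" using descent[of "x + w" x] by simp
  also have "inner (Dg x) w \<le> norm (Dg x) * norm w" by (rule norm_cauchy_schwarz)
  also have "\<dots> \<le> (norm (Dg x))^2/2 + (norm w)^2/2"
    by (rule prod_le_half_sq)
  also have "\<dots> \<le> 2 * c * g x + (norm w)^2/2" using grad_bound[of x] by simp
  finally show ?thesis by (simp add: algebra_simps)
qed

end

lemma sq_integrable:
  assumes "prob_space M" and [measurable]: "f \<in> borel_measurable M"
    and fin: "(\<integral>\<^sup>+x. ennreal ((f x)^2) \<partial>M) < \<infinity>"
  shows "integrable M (f :: _ \<Rightarrow> real)"
proof (rule integrableI_bounded)
  interpret prob_space M by fact
  have "(\<integral>\<^sup>+x. ennreal (norm (f x)) \<partial>M) \<le> (\<integral>\<^sup>+x. (1 + ennreal ((f x)^2)) \<partial>M)"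
  proof (rule nn_integral_mono)
    fix x have "norm (f x) \<le> 1 + (f x)^2"
      using abs_le_1_sq[of "f x"] by simp
    then show "ennreal (norm (f x)) \<le> 1 + ennreal ((f x)^2)"
      by (metis ennreal_leI ennreal_plus one_add_one zero_le_one zero_le_power2 ennreal_1)
  qed
  also have "\<dots> = 1 + (\<integral>\<^sup>+x. ennreal ((f x)^2) \<partial>M)"
    by (subst nn_integral_add) (auto simp: emeasure_space_1)
  also have "\<dots> < \<infinity>" using fin by (simp add: ennreal_add_less_top)
  finally show "(\<integral>\<^sup>+x. ennreal (norm (f x)) \<partial>M) < \<infinity>" .
qed simp

context hb begin

declare DG_meas[measurable]

definition mu where "mu n = distr P S (\<xi> n)"

lemma sets_mu[simp, measurable_cong]: "sets (mu n) = sets S" and space_mu[simp]: "space (mu n) = space S"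
  by (simp_all add: mu_def)

lemma mu_prob: "n \<ge> 1 \<Longrightarrow> prob_space (mu n)"
  unfolding mu_def by (rule prob_space.prob_space_distr[OF prob xi_rv])

lemma DG_meas1[measurable]: "(\<lambda>s. DG x s) \<in> borel_measurable S"
  by measurable

lemma G_int_mu: "n \<ge> 1 \<Longrightarrow> integrable (mu n) (G x)"
  unfolding mu_def using G_integrable[of n x] G_meas[of x] xi_rv[of n]
  by (subst integrable_distr_eq) auto

lemma g_mu: "n \<ge> 1 \<Longrightarrow> g x = (\<integral>s. G x s \<partial>mu n)"
  unfolding mu_def using unbiased[of n x] G_meas[of x] xi_rv[of n]
  by (subst integral_distr) auto

lemma var_mu: "n \<ge> 1 \<Longrightarrow> (\<integral>\<^sup>+s. ennreal ((norm (Dg \<theta> - DG \<theta> s))\<^sup>2) \<partial>mu n) \<le> ennreal (K * (1 + g \<theta>))"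
proof -
  assume n: "n \<ge> 1"
  have "(\<integral>\<^sup>+s. ennreal ((norm (Dg \<theta> - DG \<theta> s))\<^sup>2) \<partial>mu n) = (\<integral>\<^sup>+\<omega>. ennreal ((norm (Dg \<theta> - DG \<theta> (\<xi> n \<omega>)))\<^sup>2) \<partial>P)"
    unfolding mu_def by (rule nn_integral_distr[OF xi_rv[OF n]]) measurable
  then show ?thesis using variance[OF n, of \<theta>] by simp
qed

lemma DGsq: assumes n: "n \<ge> 1"
  shows "(\<integral>\<^sup>+s. ennreal ((norm (DG \<theta> s))\<^sup>2) \<partial>mu n) \<le> ennreal (2 * (norm (Dg \<theta>))^2 + 2 * (K * (1 + g \<theta>)))"
proof -
  interpret prob_space "mu n" by (rule mu_prob[OF n])
  have "(\<integral>\<^sup>+s. ennreal ((norm (DG \<theta> s))\<^sup>2) \<partial>mu n)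
     \<le> (\<integral>\<^sup>+s. (ennreal (2 * (norm (Dg \<theta>))^2) + 2 * ennreal ((norm (Dg \<theta> - DG \<theta> s))\<^sup>2)) \<partial>mu n)"
  proof (rule nn_integral_mono)
    fix s
    have "norm (DG \<theta> s) \<le> norm (Dg \<theta>) + norm (Dg \<theta> - DG \<theta> s)"
      by (metis norm_minus_commute norm_triangle_sub)
    hence "(norm (DG \<theta> s))^2 \<le> (norm (Dg \<theta>) + norm (Dg \<theta> - DG \<theta> s))^2"
      by (simp add: power_mono)
    also have "\<dots> \<le> 2 * (norm (Dg \<theta>))^2 + 2 * (norm (Dg \<theta> - DG \<theta> s))^2"
      by (rule sum_sq_le)
    finally have "ennreal ((norm (DG \<theta> s))\<^sup>2) \<le> ennreal (2 * (norm (Dg \<theta>))^2 + 2 * (norm (Dg \<theta> - DG \<theta> s))^2)"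
      by (rule ennreal_leI)
    also have "\<dots> = ennreal (2 * (norm (Dg \<theta>))^2) + 2 * ennreal ((norm (Dg \<theta> - DG \<theta> s))\<^sup>2)"
      by (simp add: ennreal_plus ennreal_mult)
    finally show "ennreal ((norm (DG \<theta> s))\<^sup>2) \<le> ennreal (2 * (norm (Dg \<theta>))^2) + 2 * ennreal ((norm (Dg \<theta> - DG \<theta> s))\<^sup>2)" .
  qed
  also have "\<dots> = ennreal (2 * (norm (Dg \<theta>))^2) + 2 * (\<integral>\<^sup>+s. ennreal ((norm (Dg \<theta> - DG \<theta> s))\<^sup>2) \<partial>mu n)"
    using emeasure_space_1 by (subst nn_integral_add) (auto simp: nn_integral_cmult)
  also have "\<dots> \<le> ennreal (2 * (norm (Dg \<theta>))^2) + 2 * ennreal (K * (1 + g \<theta>))"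
    using var_mu[OF n, of \<theta>] by (intro add_left_mono mult_left_mono) auto
  also have "\<dots> = ennreal (2 * (norm (Dg \<theta>))^2 + 2 * (K * (1 + g \<theta>)))"
    using K_pos g_nonneg[of \<theta>] by (simp add: ennreal_plus ennreal_mult)
  finally show ?thesis .
qed

end

context hb begin

lemma g_cont: "continuous_on UNIV g"
  using g_grad unfolding gderiv_def
  by (meson continuous_at_imp_continuous_on has_derivative_continuous)

lemma W_exists: "\<exists>W\<ge>0. \<forall>t\<in>{0..1}. 2*(norm (Dg (\<theta> + t *\<^sub>R e)))^2 + 2*(K*(1 + g (\<theta> + t *\<^sub>R e))) \<le> W"
proof -
  define w where "w t = 2*(norm (Dg (\<theta> + t *\<^sub>R e)))^2 + 2*(K*(1 + g (\<theta> + t *\<^sub>R e)))" for t :: real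
  have "continuous_on {0..1} w" unfolding w_def
    by (intro continuous_intros continuous_on_compose2[OF Dg_cont] continuous_on_compose2[OF g_cont]) auto
  then obtain t0 where "t0 \<in> {0..1}" "\<forall>t\<in>{0..1}. w t \<le> w t0"
    using continuous_attains_sup[of "{0..1::real}" w] by auto
  moreover have "w t0 \<ge> 0" unfolding w_def using K_pos g_nonneg[of "\<theta> + t0 *\<^sub>R e"] by simp
  ultimately show ?thesis unfolding w_def by blast
qed

lemma pair_sf: "n \<ge> 1 \<Longrightarrow> pair_sigma_finite lborel (mu n)"
proof -
  assume n: "n \<ge> 1"
  interpret prob_space "mu n" by (rule mu_prob[OF n])
  show ?thesis by (intro pair_sigma_finite.intro) unfold_locales
qed

lemma q_sq:
  assumes n: "n \<ge> 1" and h: "0 < h" "h \<le> 1"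
    and W: "\<forall>t\<in>{0..1}. 2*(norm (Dg (\<theta> + t *\<^sub>R e)))^2 + 2*(K*(1 + g (\<theta> + t *\<^sub>R e))) \<le> W" "W \<ge> 0"
  shows "(\<integral>\<^sup>+s. ennreal (((G (\<theta> + h *\<^sub>R e) s - G \<theta> s)/h)^2) \<partial>mu n) \<le> ennreal ((norm e)^2 * W)"
proof -
  interpret prob_space "mu n" by (rule mu_prob[OF n])
  interpret PS: pair_sigma_finite lborel "mu n" by (rule pair_sf[OF n])
  define F where "F s t = ennreal (indicator {0..h} t * (inner e (DG (\<theta> + t *\<^sub>R e) s))^2)" for s t
  have Fmeas: "(\<lambda>(t, s). F s t) \<in> borel_measurable (lborel \<Otimes>\<^sub>M mu n)"
    unfolding F_def by measurable
  have mono_l: "\<And>x y. x \<le> y \<Longrightarrow> ennreal (1/h) * x \<le> ennreal (1/h) * y"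
    by (rule mult_left_mono) simp_all
  have "(\<integral>\<^sup>+s. ennreal (((G (\<theta> + h *\<^sub>R e) s - G \<theta> s)/h)^2) \<partial>mu n)
      \<le> (\<integral>\<^sup>+s. ennreal (1/h) * (\<integral>\<^sup>+t. F s t \<partial>lborel) \<partial>mu n)"
  proof (rule nn_integral_mono)
    fix s assume s: "s \<in> space (mu n)"
    have "ennreal (((G (\<theta> + h *\<^sub>R e) s - G (\<theta> + 0 *\<^sub>R e) s)/h)^2) \<le> ennreal (1/h) * (\<integral>\<^sup>+t. F s t \<partial>lborel)"
      unfolding F_def
      by (rule fsq[OF h(1)]) (use s in \<open>auto intro!: line_deriv G_diff\<close>)
    then show "ennreal (((G (\<theta> + h *\<^sub>R e) s - G \<theta> s)/h)^2) \<le> ennreal (1/h) * (\<integral>\<^sup>+t. F s t \<partial>lborel)"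
      by simp
  qed
  also have "\<dots> = ennreal (1/h) * (\<integral>\<^sup>+s. (\<integral>\<^sup>+t. F s t \<partial>lborel) \<partial>mu n)"
  proof (rule nn_integral_cmult)
    have "(\<lambda>(s, t). F s t) \<in> borel_measurable (mu n \<Otimes>\<^sub>M lborel)"
      unfolding F_def by measurable
    then show "(\<lambda>s. \<integral>\<^sup>+t. F s t \<partial>lborel) \<in> borel_measurable (mu n)"
      by (rule lborel.borel_measurable_nn_integral)
  qed
  also have "(\<integral>\<^sup>+s. (\<integral>\<^sup>+t. F s t \<partial>lborel) \<partial>mu n) = (\<integral>\<^sup>+t. (\<integral>\<^sup>+s. F s t \<partial>mu n) \<partial>lborel)"
    using PS.Fubini'[of "\<lambda>t s. F s t"] Fmeas by simp
  also have "\<dots> \<le> (\<integral>\<^sup>+t. ennreal (indicator {0..h} t * ((norm e)^2 * W)) \<partial>lborel)"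
  proof (rule nn_integral_mono)
    fix t
    show "(\<integral>\<^sup>+s. F s t \<partial>mu n) \<le> ennreal (indicator {0..h} t * ((norm e)^2 * W))"
    proof (cases "t \<in> {0..h}")
      case False then show ?thesis by (simp add: F_def)
    next
      case True
      have "(\<integral>\<^sup>+s. F s t \<partial>mu n) \<le> (\<integral>\<^sup>+s. ennreal ((norm e)^2) * ennreal ((norm (DG (\<theta> + t *\<^sub>R e) s))^2) \<partial>mu n)"
      proof (rule nn_integral_mono)
        fix s
        have "(inner e (DG (\<theta> + t *\<^sub>R e) s))^2 \<le> (norm e * norm (DG (\<theta> + t *\<^sub>R e) s))^2"
        proof -
          have "\<bar>inner e (DG (\<theta> + t *\<^sub>R e) s)\<bar> \<le> norm e * norm (DG (\<theta> + t *\<^sub>R e) s)"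
            by (rule Cauchy_Schwarz_ineq2)
          then have "\<bar>inner e (DG (\<theta> + t *\<^sub>R e) s)\<bar>^2 \<le> (norm e * norm (DG (\<theta> + t *\<^sub>R e) s))^2"
            by (rule power_mono) simp
          then show ?thesis by simp
        qed
        then show "F s t \<le> ennreal ((norm e)^2) * ennreal ((norm (DG (\<theta> + t *\<^sub>R e) s))^2)"
          using True by (simp add: F_def ennreal_mult[symmetric] power_mult_distrib ennreal_leI)
      qed
      also have "\<dots> = ennreal ((norm e)^2) * (\<integral>\<^sup>+s. ennreal ((norm (DG (\<theta> + t *\<^sub>R e) s))^2) \<partial>mu n)"
        by (rule nn_integral_cmult) measurable
      also have "\<dots> \<le> ennreal ((norm e)^2) * ennreal (2 * (norm (Dg (\<theta> + t *\<^sub>R e)))^2 + 2 * (K * (1 + g (\<theta> + t *\<^sub>R e))))"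
        by (intro mult_left_mono DGsq[OF n]) auto
      also have "\<dots> \<le> ennreal ((norm e)^2) * ennreal W"
        using W True h by (intro mult_left_mono ennreal_leI) auto
      finally show ?thesis using True W by (simp add: ennreal_mult)
    qed
  qed
  also have "\<dots> = ennreal ((norm e)^2 * W) * ennreal h"
  proof -
    have "(\<integral>\<^sup>+t. ennreal (indicator {0..h} t * ((norm e)^2 * W)) \<partial>lborel)
        = (\<integral>\<^sup>+t. ennreal ((norm e)^2 * W) * indicator {0..h} t \<partial>lborel)"
      by (intro nn_integral_cong) (auto simp: indicator_def)
    also have "\<dots> = ennreal ((norm e)^2 * W) * emeasure lborel {0..h}"
      by (rule nn_integral_cmult_indicator) simp
    also have "\<dots> = ennreal ((norm e)^2 * W) * ennreal h" using h by simp
    finally show ?thesis .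
  qed
  finally have "(\<integral>\<^sup>+s. ennreal (((G (\<theta> + h *\<^sub>R e) s - G \<theta> s)/h)^2) \<partial>mu n)
      \<le> ennreal (1/h) * (ennreal ((norm e)^2 * W) * ennreal h)"
    using mono_l by blast
  also have "\<dots> = ennreal ((norm e)^2 * W)"
    using h W by (simp add: ennreal_mult[symmetric] mult.assoc)
  finally show ?thesis .
qed

end

context hb begin

lemma h_filterlim: "filterlim (\<lambda>k. 1 / real (Suc k)) (at (0::real)) sequentially"
proof (rule filterlim_atI)
  show "((\<lambda>k. 1 / real (Suc k)) \<longlongrightarrow> 0) sequentially"
    using LIMSEQ_inverse_real_of_nat by (simp add: inverse_eq_divide)
qed simp

lemma diffquot_lim:
  assumes "(f has_real_derivative D) (at 0)"
  shows "(\<lambda>k. (f (1 / real (Suc k)) - f 0) / (1 / real (Suc k))) \<longlonglongrightarrow> D"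
proof -
  have "((\<lambda>t. (f (0 + t) - f 0) / t) \<longlongrightarrow> D) (at 0)"
    using assms unfolding DERIV_def .
  from filterlim_compose[OF this h_filterlim] show ?thesis by simp
qed

lemma grad_unbiased:
  assumes n: "n \<ge> 1"
  shows "integrable (mu n) (\<lambda>s. inner e (DG \<theta> s))"
    and "(\<integral>s. inner e (DG \<theta> s) \<partial>mu n) = inner e (Dg \<theta>)"
proof -
  interpret prob_space "mu n" by (rule mu_prob[OF n])
  obtain W where W: "W \<ge> 0" "\<forall>t\<in>{0..1}. 2*(norm (Dg (\<theta> + t *\<^sub>R e)))^2 + 2*(K*(1 + g (\<theta> + t *\<^sub>R e))) \<le> W"
    using W_exists by blast
  define d where "d s = inner e (DG \<theta> s)" for s
  define h where "h k = 1 / real (Suc k)" for k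
  define q where "q k s = (G (\<theta> + h k *\<^sub>R e) s - G \<theta> s) / h k" for k s
  have h_pos: "0 < h k" "h k \<le> 1" for k by (auto simp: h_def)
  have d_meas[measurable]: "d \<in> borel_measurable (mu n)" unfolding d_def by measurable
  have q_meas[measurable]: "q k \<in> borel_measurable (mu n)" for k
    unfolding q_def using G_meas by measurable
  have sqd: "(\<integral>\<^sup>+s. ennreal ((d s)^2) \<partial>mu n) \<le> ennreal ((norm e)^2 * W)"
  proof -
    have "(\<integral>\<^sup>+s. ennreal ((d s)^2) \<partial>mu n) \<le> (\<integral>\<^sup>+s. ennreal ((norm e)^2) * ennreal ((norm (DG \<theta> s))^2) \<partial>mu n)"
    proof (rule nn_integral_mono)
      fix s
      have "\<bar>d s\<bar> \<le> norm e * norm (DG \<theta> s)" unfolding d_def by (rule Cauchy_Schwarz_ineq2)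
      then have "\<bar>d s\<bar>^2 \<le> (norm e * norm (DG \<theta> s))^2" by (rule power_mono) simp
      then show "ennreal ((d s)^2) \<le> ennreal ((norm e)^2) * ennreal ((norm (DG \<theta> s))^2)"
        by (simp add: ennreal_mult[symmetric] power_mult_distrib ennreal_leI)
    qed
    also have "\<dots> = ennreal ((norm e)^2) * (\<integral>\<^sup>+s. ennreal ((norm (DG \<theta> s))^2) \<partial>mu n)"
      by (rule nn_integral_cmult) measurable
    also have "\<dots> \<le> ennreal ((norm e)^2) * ennreal (2 * (norm (Dg \<theta>))^2 + 2 * (K * (1 + g \<theta>)))"
      by (intro mult_left_mono DGsq[OF n]) auto
    also have "\<dots> \<le> ennreal ((norm e)^2) * ennreal W"
      using W(2)[rule_format, of 0] by (intro mult_left_mono ennreal_leI) auto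
    finally show ?thesis using W(1) by (simp add: ennreal_mult)
  qed
  have sqq: "(\<integral>\<^sup>+s. ennreal ((q k s)^2) \<partial>mu n) \<le> ennreal ((norm e)^2 * W)" for k
    unfolding q_def by (rule q_sq[OF n h_pos W(2) W(1)])
  have d_int: "integrable (mu n) d"
    by (rule sq_integrable[OF prob_space_axioms d_meas]) (use sqd in \<open>auto intro: le_less_trans\<close>)
  then show "integrable (mu n) (\<lambda>s. inner e (DG \<theta> s))" by (simp add: d_def[abs_def])
  have q_int: "integrable (mu n) (q k)" for k
    unfolding q_def using G_int_mu[OF n] by auto
  have int_q: "(\<integral>s. q k s \<partial>mu n) = (g (\<theta> + h k *\<^sub>R e) - g \<theta>) / h k" for k
    unfolding q_def using G_int_mu[OF n] by (simp add: g_mu[OF n])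
  have lim_g: "(\<lambda>k. \<integral>s. q k s \<partial>mu n) \<longlonglongrightarrow> inner e (Dg \<theta>)"
    unfolding int_q h_def using diffquot_lim[of "\<lambda>t. g (\<theta> + t *\<^sub>R e)"] g_line[where x=\<theta> and t=0 and e=e] by simp
  have lim_q: "(\<lambda>k. q k s) \<longlonglongrightarrow> d s" if s: "s \<in> space (mu n)" for s
    unfolding q_def h_def d_def
    using diffquot_lim[of "\<lambda>t. G (\<theta> + t *\<^sub>R e) s"] line_deriv[where x=\<theta> and t=0 and e=e, OF G_diff[OF s[simplified]]] by simp
  define B where "B = 4 * ((norm e)^2 * W)"
  have B_nn: "B \<ge> 0" using W(1) by (simp add: B_def)
  have sqdiff: "(\<integral>\<^sup>+s. ennreal ((q k s - d s)^2) \<partial>mu n) \<le> ennreal B" for k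
  proof -
    have "(\<integral>\<^sup>+s. ennreal ((q k s - d s)^2) \<partial>mu n) \<le> (\<integral>\<^sup>+s. 2 * ennreal ((q k s)^2) + 2 * ennreal ((d s)^2) \<partial>mu n)"
    proof (rule nn_integral_mono)
      fix s
      have "(q k s - d s)^2 \<le> 2 * (q k s)^2 + 2 * (d s)^2"
        using sum_sq_le[of "q k s" "- d s"] by simp
      then have "ennreal ((q k s - d s)^2) \<le> ennreal (2 * (q k s)^2 + 2 * (d s)^2)" by (rule ennreal_leI)
      also have "\<dots> = 2 * ennreal ((q k s)^2) + 2 * ennreal ((d s)^2)"
        by (simp add: ennreal_plus ennreal_mult)
      finally show "ennreal ((q k s - d s)^2) \<le> 2 * ennreal ((q k s)^2) + 2 * ennreal ((d s)^2)" .
    qed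
    also have "\<dots> = 2 * (\<integral>\<^sup>+s. ennreal ((q k s)^2) \<partial>mu n) + 2 * (\<integral>\<^sup>+s. ennreal ((d s)^2) \<partial>mu n)"
      by (subst nn_integral_add) (auto simp: nn_integral_cmult)
    also have "\<dots> \<le> 2 * ennreal ((norm e)^2 * W) + 2 * ennreal ((norm e)^2 * W)"
      by (intro add_mono mult_left_mono sqq sqd) auto
    also have "\<dots> = ennreal (2 * ((norm e)^2 * W) + 2 * ((norm e)^2 * W))"
      using W(1) by (subst ennreal_plus) (auto simp: ennreal_mult)
    also have "\<dots> = ennreal B" by (simp add: B_def mult.commute)
    finally show ?thesis .
  qed
  have conv: "(\<lambda>k. \<integral>s. q k s \<partial>mu n) \<longlonglongrightarrow> (\<integral>s. d s \<partial>mu n)"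
  proof (rule LIMSEQ_I)
    fix r :: real assume r: "0 < r"
    define M where "M = 2 * (B + 1) / r"
    have M_pos: "M > 0" using r B_nn by (simp add: M_def)
    define m where "m k s = min \<bar>q k s - d s\<bar> M" for k s
    have m_meas[measurable]: "m k \<in> borel_measurable (mu n)" for k unfolding m_def by measurable
    have w_int: "integrable (mu n) (\<lambda>s. M)" by simp
    have m_ae: "AE s in mu n. (\<lambda>k. m k s) \<longlonglongrightarrow> 0"
    proof (rule AE_I2)
      fix s assume s: "s \<in> space (mu n)"
      have "(\<lambda>k. q k s - d s) \<longlonglongrightarrow> 0" using lim_q[OF s] by (rule LIM_zero)
      then have "(\<lambda>k. \<bar>q k s - d s\<bar>) \<longlonglongrightarrow> 0" by (rule tendsto_rabs_zero)
      then have "(\<lambda>k. min \<bar>q k s - d s\<bar> M) \<longlonglongrightarrow> min 0 M" by (intro tendsto_min tendsto_const)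
      then show "(\<lambda>k. m k s) \<longlonglongrightarrow> 0" using M_pos by (simp add: m_def min_def)
    qed
    have m_bd: "AE s in mu n. norm (m k s) \<le> M" for k
      using M_pos by (auto simp: m_def)
    have m_int: "integrable (mu n) (m k)" for k
      by (rule integrable_dominated_convergence2[where f="\<lambda>s. 0" and w="\<lambda>s. M", OF _ m_meas w_int m_ae m_bd]) simp
    have m_lim: "(\<lambda>k. \<integral>s. m k s \<partial>mu n) \<longlonglongrightarrow> (\<integral>s. 0 \<partial>mu n)"
      by (rule integral_dominated_convergence[where f="\<lambda>s. 0" and w="\<lambda>s. M", OF _ m_meas w_int m_ae m_bd]) simp
    then have m_lim': "(\<lambda>k. \<integral>s. m k s \<partial>mu n) \<longlonglongrightarrow> 0" by simp
    obtain N where N0: "\<forall>k\<ge>N. norm ((\<integral>s. m k s \<partial>mu n) - 0) < r/2"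
      using LIMSEQ_D[OF m_lim', of "r/2"] r by auto
    then have N: "\<And>k. k \<ge> N \<Longrightarrow> norm ((\<integral>s. m k s \<partial>mu n) - 0) < r/2" by auto
    show "\<exists>N. \<forall>k\<ge>N. norm ((\<integral>s. q k s \<partial>mu n) - (\<integral>s. d s \<partial>mu n)) < r"
    proof (intro exI allI impI)
      fix k assume k: "N \<le> k"
      have int_nn: "0 \<le> (\<integral>s. m k s \<partial>mu n)"
        by (rule integral_nonneg_AE) (use M_pos in \<open>auto simp: m_def\<close>)
      have diff_int: "integrable (mu n) (\<lambda>s. \<bar>q k s - d s\<bar>)"
        using q_int d_int by auto
      have "ennreal (\<integral>s. \<bar>q k s - d s\<bar> \<partial>mu n) = (\<integral>\<^sup>+s. ennreal \<bar>q k s - d s\<bar> \<partial>mu n)"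
        by (rule nn_integral_eq_integral[symmetric, OF diff_int]) auto
      also have "\<dots> \<le> (\<integral>\<^sup>+s. ennreal (m k s) + ennreal ((q k s - d s)^2) * ennreal (1/M) \<partial>mu n)"
      proof (rule nn_integral_mono)
        fix s
        define x where "x = \<bar>q k s - d s\<bar>"
        have x0: "x \<ge> 0" by (simp add: x_def)
        have "x \<le> min x M + x^2 / M"
        proof (cases "x \<le> M")
          case True then show ?thesis using M_pos by simp
        next
          case False
          then have "1 \<le> x / M" using M_pos by simp
          then have "x * 1 \<le> x * (x / M)" using x0 by (rule mult_left_mono)
          then show ?thesis using False M_pos by (simp add: power2_eq_square)
        qed
        then have "ennreal x \<le> ennreal (min x M + x^2 / M)" by (rule ennreal_leI)
        also have "\<dots> = ennreal (m k s) + ennreal ((q k s - d s)^2) * ennreal (1/M)"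
          using M_pos x0 by (simp add: m_def x_def ennreal_plus ennreal_mult[symmetric] power2_abs divide_inverse)
        finally show "ennreal \<bar>q k s - d s\<bar> \<le> ennreal (m k s) + ennreal ((q k s - d s)^2) * ennreal (1/M)"
          by (simp add: x_def)
      qed
      also have "\<dots> = (\<integral>\<^sup>+s. ennreal (m k s) \<partial>mu n) + (\<integral>\<^sup>+s. ennreal ((q k s - d s)^2) \<partial>mu n) * ennreal (1/M)"
        by (subst nn_integral_add) (auto simp: nn_integral_multc)
      also have "(\<integral>\<^sup>+s. ennreal (m k s) \<partial>mu n) = ennreal (\<integral>s. m k s \<partial>mu n)"
        using M_pos by (intro nn_integral_eq_integral[OF m_int]) (auto simp: m_def)
      also have "ennreal (\<integral>s. m k s \<partial>mu n) + (\<integral>\<^sup>+s. ennreal ((q k s - d s)^2) \<partial>mu n) * ennreal (1/M)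
          \<le> ennreal (\<integral>s. m k s \<partial>mu n) + ennreal B * ennreal (1/M)"
        by (intro add_left_mono mult_right_mono sqdiff) auto
      also have "\<dots> = ennreal ((\<integral>s. m k s \<partial>mu n) + B / M)"
        using M_pos B_nn int_nn
        by (simp add: ennreal_plus ennreal_mult[symmetric] divide_inverse)
      finally have le1: "(\<integral>s. \<bar>q k s - d s\<bar> \<partial>mu n) \<le> (\<integral>s. m k s \<partial>mu n) + B / M"
        using M_pos B_nn int_nn by (subst (asm) ennreal_le_iff) auto
      have "B / M < r / 2" using r B_nn by (simp add: M_def field_simps)
      moreover have "(\<integral>s. m k s \<partial>mu n) < r / 2" using N[OF k] by simp
      moreover have "norm ((\<integral>s. q k s \<partial>mu n) - (\<integral>s. d s \<partial>mu n)) \<le> (\<integral>s. \<bar>q k s - d s\<bar> \<partial>mu n)"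
      proof -
        have "(\<integral>s. q k s \<partial>mu n) - (\<integral>s. d s \<partial>mu n) = (\<integral>s. q k s - d s \<partial>mu n)"
          by (rule Bochner_Integration.integral_diff[OF q_int d_int, symmetric])
        also have "norm \<dots> \<le> (\<integral>s. norm (q k s - d s) \<partial>mu n)" by (rule integral_norm_bound)
        finally show ?thesis by simp
      qed
      ultimately show "norm ((\<integral>s. q k s \<partial>mu n) - (\<integral>s. d s \<partial>mu n)) < r" using le1 by linarith
    qed
  qed
  have "(\<integral>s. d s \<partial>mu n) = inner e (Dg \<theta>)" using LIMSEQ_unique[OF conv lim_g] .
  then show "(\<integral>s. inner e (DG \<theta> s) \<partial>mu n) = inner e (Dg \<theta>)" by (simp add: d_def)
qed

end

lemma two_prod_le: fixes x y t :: real assumes t: "t > 0" shows "2*x*y \<le> x^2/t + t*y^2"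
proof -
  have "0 \<le> (x - t*y)^2 / t" using t by simp
  also have "(x - t*y)^2 / t = x^2/t - 2*x*y + t*y^2"
    using t by (simp add: power2_diff field_simps power2_eq_square)
  finally show ?thesis by linarith
qed

lemma le_plus_sq_div: fixes x y :: real assumes y: "y > 0" shows "x \<le> y + x^2/y"
proof (cases "x \<le> y")
  case True then show ?thesis using y by (simp add: add_increasing2)
next
  case False
  then have "1 \<le> x / y" using y by simp
  then have "x * 1 \<le> x * (x / y)" using False y by (intro mult_left_mono) auto
  then show ?thesis using y by (simp add: power2_eq_square)
qed

context hb begin

definition beta where "beta = \<alpha> / (1 - \<alpha>)"
definition Lf where "Lf x = g (fst x - beta *\<^sub>R snd x) + (norm (snd x))^2"
definition stp where "stp k x s = (fst x - (\<alpha> *\<^sub>R snd x + \<epsilon> k *\<^sub>R DG (fst x) s), \<alpha> *\<^sub>R snd x + \<epsilon> k *\<^sub>R DG (fst x) s)"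

lemma beta_nn: "beta \<ge> 0" using alpha by (simp add: beta_def)

lemma Lf_nn: "Lf x \<ge> 0" using g_nonneg by (simp add: Lf_def add_nonneg_nonneg)

definition Pc where "Pc = c^2 * beta^2 / (2*(1-\<alpha>)) + 2*(1-\<alpha>)*\<alpha>^2"
definition C1 where "C1 = (1 + 2*c) + (1/2 + c) * beta^2"
definition C2 where "C2 = c / (1-\<alpha>)^2 + 1"
definition acoef where "acoef = Pc^2 / (1 - \<alpha>^2) + C2 * (8*c + 2*K) * C1"
definition bcoef where "bcoef = 2 * K * C2"

lemma g_theta_bound: "g (fst x) \<le> C1 * Lf x"
proof -
  obtain \<theta> v where x: "x = (\<theta>, v)" by (cases x)
  have "g \<theta> = g ((\<theta> - beta *\<^sub>R v) + beta *\<^sub>R v)" by simp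
  also have "\<dots> \<le> (1 + 2*c) * g (\<theta> - beta *\<^sub>R v) + (1/2 + c) * (norm (beta *\<^sub>R v))^2"
    by (rule g_shift)
  also have "\<dots> = (1 + 2*c) * g (\<theta> - beta *\<^sub>R v) + ((1/2 + c) * beta^2) * (norm v)^2"
    using beta_nn by (simp add: power_mult_distrib)
  also have "\<dots> \<le> C1 * g (\<theta> - beta *\<^sub>R v) + C1 * (norm v)^2"
    using c_pos beta_nn g_nonneg[of "\<theta> - beta *\<^sub>R v"]
    by (intro add_mono mult_right_mono) (auto simp: C1_def)
  finally show ?thesis by (simp add: x Lf_def algebra_simps)
qed

lemma onestep:
  assumes n: "n \<ge> 1"
  shows "(\<integral>\<^sup>+s. ennreal (Lf (stp n x s)) \<partial>mu n) \<le> ennreal ((1 + acoef * (\<epsilon> n)^2) * Lf x + bcoef * (\<epsilon> n)^2)"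
proof -
  interpret prob_space "mu n" by (rule mu_prob[OF n])
  obtain \<theta> v where x: "x = (\<theta>, v)" by (cases x)
  define e0 where "e0 = \<epsilon> n"
  have e0: "e0 > 0" using eps_pos[OF n] by (simp add: e0_def)
  define \<eta> where "\<eta> = e0 / (1 - \<alpha>)"
  have \<eta>: "\<eta> > 0" using e0 alpha by (simp add: \<eta>_def)
  define z where "z = \<theta> - beta *\<^sub>R v"
  define gr where "gr = Dg \<theta>"
  define gz where "gz = Dg z"
  define w where "w = (- \<eta>) *\<^sub>R gz + (2 * \<alpha> * e0) *\<^sub>R v"
  define Cq where "Cq = c * \<eta>^2 + e0^2"
  define c0 where "c0 = g z + \<alpha>^2 * (norm v)^2"
  define R where "R s = c0 + inner w (DG \<theta> s) + Cq * (norm (DG \<theta> s))^2" for s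
  have Cq_nn: "Cq \<ge> 0" using c_pos by (simp add: Cq_def)
  have e1: "(1 + beta) * \<alpha> = beta" and e2: "(1 + beta) * e0 = \<eta>"
    using alpha by (simp_all add: beta_def \<eta>_def field_simps)
  have pw: "Lf (stp n x s) \<le> R s" for s
  proof -
    define D where "D = DG \<theta> s"
    define v' where "v' = \<alpha> *\<^sub>R v + e0 *\<^sub>R D"
    have st: "stp n x s = (\<theta> - v', v')" by (simp add: stp_def x v'_def D_def e0_def)
    have "v' + beta *\<^sub>R v' = (1 + beta) *\<^sub>R v'" by (simp add: scaleR_add_left)
    also have "\<dots> = ((1 + beta) * \<alpha>) *\<^sub>R v + ((1 + beta) * e0) *\<^sub>R D"
      by (simp add: v'_def scaleR_add_right)
    also have "\<dots> = beta *\<^sub>R v + \<eta> *\<^sub>R D" by (simp only: e1 e2)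
    finally have "\<theta> - v' - beta *\<^sub>R v' = z - \<eta> *\<^sub>R D"
      by (simp add: z_def algebra_simps)
    then have L1: "Lf (stp n x s) = g (z - \<eta> *\<^sub>R D) + (norm v')^2"
      by (simp add: st Lf_def)
    have d1: "g (z - \<eta> *\<^sub>R D) \<le> g z + inner gz (- \<eta> *\<^sub>R D) + c * (norm (- \<eta> *\<^sub>R D))^2"
      using descent[of "z - \<eta> *\<^sub>R D" z] by (simp add: gz_def)
    have d2: "c * (norm (- \<eta> *\<^sub>R D))^2 = c * \<eta>^2 * (norm D)^2"
      using \<eta> by (simp add: power_mult_distrib)
    have d3: "(norm v')^2 = \<alpha>^2 * (norm v)^2 + inner ((2 * \<alpha> * e0) *\<^sub>R v) D + e0^2 * (norm D)^2"
    proof -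
      have "(norm v')^2 = inner v' v'" by (rule power2_norm_eq_inner)
      also have "\<dots> = \<alpha>^2 * inner v v + 2*\<alpha>*e0 * inner v D + e0^2 * inner D D"
        by (simp add: v'_def inner_add_left inner_add_right inner_commute[of D v] power2_eq_square algebra_simps)
      also have "\<dots> = \<alpha>^2 * (norm v)^2 + inner ((2 * \<alpha> * e0) *\<^sub>R v) D + e0^2 * (norm D)^2"
        by (simp add: power2_norm_eq_inner)
      finally show ?thesis .
    qed
    have d4: "inner gz (- \<eta> *\<^sub>R D) + inner ((2 * \<alpha> * e0) *\<^sub>R v) D = inner w D"
      by (simp add: w_def inner_add_left inner_add_right inner_diff_right inner_commute)
    show ?thesis using L1 d1 d2 d3 d4
      by (simp add: R_def c0_def Cq_def D_def algebra_simps)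
  qed
  have R_nn: "R s \<ge> 0" for s using pw[of s] Lf_nn[of "stp n x s"] by linarith
  have DG2_fin: "(\<integral>\<^sup>+s. ennreal ((norm (DG \<theta> s))^2) \<partial>mu n) < \<infinity>"
    using DGsq[OF n, of \<theta>] by (auto intro: le_less_trans)
  have DG2_int: "integrable (mu n) (\<lambda>s. (norm (DG \<theta> s))^2)"
    by (rule integrableI_bounded) (use DG2_fin in auto)
  have R_int: "integrable (mu n) R"
    unfolding R_def using grad_unbiased(1)[OF n, of w \<theta>] DG2_int by auto
  have int_D2: "(\<integral>s. (norm (DG \<theta> s))^2 \<partial>mu n) \<le> 2 * (norm gr)^2 + 2 * (K * (1 + g \<theta>))"
  proof -
    have "ennreal (\<integral>s. (norm (DG \<theta> s))^2 \<partial>mu n) = (\<integral>\<^sup>+s. ennreal ((norm (DG \<theta> s))^2) \<partial>mu n)"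
      by (rule nn_integral_eq_integral[symmetric, OF DG2_int]) auto
    also have "\<dots> \<le> ennreal (2 * (norm gr)^2 + 2 * (K * (1 + g \<theta>)))"
      using DGsq[OF n, of \<theta>] by (simp add: gr_def)
    finally show ?thesis using K_pos g_nonneg[of \<theta>] by (subst (asm) ennreal_le_iff) auto
  qed
  have int_R: "(\<integral>s. R s \<partial>mu n) = c0 + inner w gr + Cq * (\<integral>s. (norm (DG \<theta> s))^2 \<partial>mu n)"
    unfolding R_def using grad_unbiased[OF n, of w \<theta>] DG2_int
    using prob_space by (simp add: gr_def)
  have "(\<integral>\<^sup>+s. ennreal (Lf (stp n x s)) \<partial>mu n) \<le> (\<integral>\<^sup>+s. ennreal (R s) \<partial>mu n)"
    by (intro nn_integral_mono ennreal_leI pw)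
  also have "\<dots> = ennreal (\<integral>s. R s \<partial>mu n)"
    by (rule nn_integral_eq_integral[OF R_int]) (use R_nn in auto)
  also have "(\<integral>s. R s \<partial>mu n) \<le> (1 + acoef * (\<epsilon> n)^2) * Lf x + bcoef * (\<epsilon> n)^2"
  proof -
    define V where "V = (norm v)^2"
    define Nv where "Nv = norm v"
    define N where "N = norm gr"
    define L where "L = Lf x"
    define gt where "gt = g \<theta>"
    have V_nn: "V \<ge> 0" by (simp add: V_def)
    have Lx: "L = g z + V" by (simp add: L_def Lf_def x z_def V_def)
    have VL: "V \<le> L" using Lx g_nonneg[of z] by simp
    have "\<alpha> * \<alpha> \<le> \<alpha> * 1" by (rule mult_left_mono) (use alpha in auto)
    then have al2: "1 - \<alpha>^2 > 0" using alpha by (simp add: power2_eq_square)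
    have S1a: "norm (gz - gr) \<le> c * beta * Nv"
      using Lipschitz[of z \<theta>] beta_nn by (simp add: gz_def gr_def z_def Nv_def)
    have S1b: "- (norm (gz - gr) * N) \<le> inner (gz - gr) gr"
      using Cauchy_Schwarz_ineq2[of "gz - gr" gr] by (simp add: N_def)
    have S1c: "norm (gz - gr) * N \<le> (c * beta * Nv) * N"
      using S1a by (intro mult_right_mono) (auto simp: N_def)
    have S1: "inner gz gr \<ge> N^2 - (c * beta * Nv) * N"
    proof -
      have "inner gz gr = inner gr gr + inner (gz - gr) gr" by (simp add: inner_diff_left)
      also have "inner gr gr = N^2" by (simp add: N_def power2_norm_eq_inner)
      finally show ?thesis using S1b S1c by linarith
    qed
    have S2: "inner v gr \<le> Nv * N" using norm_cauchy_schwarz[of v gr] by (simp add: Nv_def N_def)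
    have S3: "inner w gr \<le> - \<eta> * (N^2 - (c * beta * Nv) * N) + e0 * (2 * N * (\<alpha> * Nv))"
    proof -
      have "inner w gr = - \<eta> * inner gz gr + (2 * \<alpha> * e0) * inner v gr"
        by (simp add: w_def inner_add_left inner_diff_left)
      also have "- \<eta> * inner gz gr \<le> - \<eta> * (N^2 - (c * beta * Nv) * N)"
        using S1 \<eta> by simp
      also have "(2 * \<alpha> * e0) * inner v gr \<le> (2 * \<alpha> * e0) * (Nv * N)"
        using S2 alpha e0 by (intro mult_left_mono) auto
      finally show ?thesis by (simp add: algebra_simps)
    qed
    have S4: "\<eta> * ((c * beta * Nv) * N) \<le> \<eta> * (N^2/2 + (c * beta * Nv)^2/2)"
      using \<eta> prod_le_half_sq[of "c * beta * Nv" N] by (intro mult_left_mono) (auto simp: algebra_simps)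
    have S5: "e0 * (2 * N * (\<alpha> * Nv)) \<le> e0 * (N^2 / (2*(1-\<alpha>)) + (2*(1-\<alpha>)) * (\<alpha> * Nv)^2)"
      using e0 alpha two_prod_le[of "2*(1-\<alpha>)" N "\<alpha> * Nv"] by (intro mult_left_mono) auto
    have S6eq: "- \<eta> * N^2 + \<eta> * (N^2/2 + (c * beta * Nv)^2/2) + e0 * (N^2 / (2*(1-\<alpha>)) + (2*(1-\<alpha>)) * (\<alpha> * Nv)^2)
        = e0 * Pc * V"
    proof -
      have a1: "1 - \<alpha> \<noteq> 0" "\<alpha> \<noteq> 1" "1 - \<alpha> > 0" using alpha by auto
      have h1: "e0 * (N^2 / (2*(1-\<alpha>))) = \<eta> * (N^2/2)" using a1 by (simp add: \<eta>_def)
      have h2: "\<eta> * ((c * beta * Nv)^2/2) = e0 * (c^2 * beta^2 / (2*(1-\<alpha>))) * V"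
        using a1 by (simp add: \<eta>_def V_def Nv_def power_mult_distrib mult_ac)
      have h3: "e0 * ((2*(1-\<alpha>)) * (\<alpha> * Nv)^2) = e0 * (2*(1-\<alpha>)*\<alpha>^2) * V"
        by (simp add: V_def Nv_def power_mult_distrib)
      have h0: "- \<eta> * N^2 + \<eta> * (N^2/2) + \<eta> * (N^2/2) = 0" by (simp add: field_simps)
      have h4: "e0 * Pc * V = e0 * (c^2 * beta^2 / (2*(1-\<alpha>))) * V + e0 * (2*(1-\<alpha>)*\<alpha>^2) * V"
        by (simp add: Pc_def distrib_left distrib_right)
      have h5: "- \<eta> * N^2 + \<eta> * (N^2/2 + (c * beta * Nv)^2/2) + e0 * (N^2 / (2*(1-\<alpha>)) + (2*(1-\<alpha>)) * (\<alpha> * Nv)^2)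
         = - \<eta> * N^2 + \<eta> * (N^2/2) + \<eta> * ((c * beta * Nv)^2/2) + e0 * (N^2 / (2*(1-\<alpha>))) + e0 * ((2*(1-\<alpha>)) * (\<alpha> * Nv)^2)"
        by (simp only: distrib_left add.assoc)
      show ?thesis using h0 h1 h2 h3 h4 h5 by linarith
    qed
    have S6: "inner w gr \<le> e0 * Pc * V"
      using S3 S4 S5 S6eq by (simp add: algebra_simps) linarith
    have S7: "\<alpha>^2 + e0 * Pc \<le> 1 + (Pc^2 / (1-\<alpha>^2)) * e0^2"
      using le_plus_sq_div[OF al2, of "e0 * Pc"] by (simp add: power_mult_distrib field_simps)
    have A4: "(\<alpha>^2 + e0 * Pc) * V \<le> V + (Pc^2 / (1-\<alpha>^2)) * e0^2 * V"
      using mult_right_mono[OF S7 V_nn] by (simp add: algebra_simps)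
    have A5: "(Pc^2 / (1-\<alpha>^2)) * e0^2 * V \<le> (Pc^2 / (1-\<alpha>^2)) * e0^2 * L"
      using VL al2 by (intro mult_left_mono) auto
    have gtb: "gt \<le> C1 * L" using g_theta_bound[of x] by (simp add: gt_def L_def x)
    have Gb: "N^2 \<le> 4 * c * gt" using grad_bound[of \<theta>] by (simp add: N_def gr_def gt_def)
    have A6: "2 * N^2 + 2 * (K * (1 + gt)) \<le> (8*c + 2*K) * C1 * L + 2 * K"
    proof -
      have "(8*c + 2*K) * gt \<le> (8*c + 2*K) * (C1 * L)" using gtb c_pos K_pos by (intro mult_left_mono) auto
      then show ?thesis using Gb by (simp add: algebra_simps)
    qed
    have ED2: "Cq * (\<integral>s. (norm (DG \<theta> s))^2 \<partial>mu n) \<le> Cq * ((8*c + 2*K) * C1 * L + 2 * K)"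
    proof -
      have "(\<integral>s. (norm (DG \<theta> s))^2 \<partial>mu n) \<le> (8*c + 2*K) * C1 * L + 2 * K"
        using int_D2 A6 by (simp add: N_def gt_def)
      then show ?thesis using Cq_nn by (rule mult_left_mono)
    qed
    have A8: "Cq = e0^2 * C2" using alpha by (simp add: Cq_def C2_def \<eta>_def field_simps power2_eq_square)
    have fin: "(1 + acoef * e0^2) * L + bcoef * e0^2
        = L + (Pc^2 / (1-\<alpha>^2)) * e0^2 * L + e0^2 * C2 * ((8*c + 2*K) * C1 * L + 2 * K)"
      by (simp add: acoef_def bcoef_def algebra_simps)
    have "(\<integral>s. R s \<partial>mu n) \<le> g z + (\<alpha>^2 + e0 * Pc) * V + e0^2 * C2 * ((8*c + 2*K) * C1 * L + 2 * K)"
      using int_R S6 ED2 A8 by (simp add: c0_def V_def algebra_simps)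
    also have "\<dots> \<le> (1 + acoef * e0^2) * L + bcoef * e0^2"
      using A4 A5 fin Lx by linarith
    finally show ?thesis by (simp add: e0_def L_def)
  qed
  finally show ?thesis by (simp add: ennreal_leI)
qed

end

context hb begin

lemma hb_Suc: "hb_state TYPE('n) DG \<alpha> \<epsilon> X \<theta>1 v0 (Suc n) \<omega> = stp (Suc n) (hb_state TYPE('n) DG \<alpha> \<epsilon> X \<theta>1 v0 n \<omega>) (X (Suc n) \<omega>)"
  by (simp add: stp_def split_def Let_def)

lemma hb_restrict: "{1..n} \<subseteq> I \<Longrightarrow> hb_state TYPE('n) DG \<alpha> \<epsilon> \<xi> \<theta>1 v0 n \<omega> = hb_state TYPE('n) DG \<alpha> \<epsilon> (\<lambda>i f. f i) \<theta>1 v0 n (restrict (\<lambda>i. \<xi> i \<omega>) I)"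
proof (induction n)
  case 0 then show ?case by simp
next
  case (Suc n)
  have "{1..n} \<subseteq> I" using Suc.prems by (force simp: subset_eq)
  then have IH: "hb_state TYPE('n) DG \<alpha> \<epsilon> \<xi> \<theta>1 v0 n \<omega> = hb_state TYPE('n) DG \<alpha> \<epsilon> (\<lambda>i f. f i) \<theta>1 v0 n (restrict (\<lambda>i. \<xi> i \<omega>) I)"
    by (rule Suc.IH)
  have "Suc n \<in> I" using Suc.prems by auto
  then show ?case by (simp only: hb_Suc IH) simp
qed

lemma acoef_nn: "acoef \<ge> 0"
proof -
  have "1 - \<alpha>^2 > 0"
  proof -
    have "\<alpha> * \<alpha> \<le> \<alpha> * 1" by (rule mult_left_mono) (use alpha in auto)
    then show ?thesis using alpha by (simp add: power2_eq_square)
  qed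
  moreover have "C2 \<ge> 0" "C1 \<ge> 0" using c_pos alpha by (auto simp: C2_def C1_def intro!: add_nonneg_nonneg)
  ultimately show ?thesis using c_pos K_pos unfolding acoef_def by (intro add_nonneg_nonneg mult_nonneg_nonneg) auto
qed

lemma bcoef_nn: "bcoef \<ge> 0" using c_pos K_pos alpha by (auto simp: bcoef_def C2_def intro!: add_nonneg_nonneg)

lemma g_meas[measurable]: "g \<in> borel_measurable borel"
  by (rule borel_measurable_continuous_onI[OF g_cont])

lemma Lf_meas[measurable]: "Lf \<in> borel_measurable borel"
  unfolding Lf_def borel_prod[symmetric] by measurable

lemma stp_meas[measurable]: "(\<lambda>(x, s). stp k x s) \<in> borel_measurable (borel \<Otimes>\<^sub>M S)"
  unfolding stp_def borel_prod[symmetric] by measurable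

lemma hb_vec_meas: "{1..n} \<subseteq> I \<Longrightarrow> (\<lambda>f. hb_state TYPE('n) DG \<alpha> \<epsilon> (\<lambda>i f. f i) \<theta>1 v0 n f) \<in> borel_measurable (PiM I (\<lambda>_. S))"
proof (induction n)
  case 0 then show ?case by simp
next
  case (Suc n)
  have "{1..n} \<subseteq> I" using Suc.prems by (force simp: subset_eq)
  then have IH: "(\<lambda>f. hb_state TYPE('n) DG \<alpha> \<epsilon> (\<lambda>i f. f i) \<theta>1 v0 n f) \<in> borel_measurable (PiM I (\<lambda>_. S))"
    by (rule Suc.IH)
  have I: "Suc n \<in> I" using Suc.prems by auto
  have "(\<lambda>f. (hb_state TYPE('n) DG \<alpha> \<epsilon> (\<lambda>i f. f i) \<theta>1 v0 n f, f (Suc n))) \<in> measurable (PiM I (\<lambda>_. S)) (borel \<Otimes>\<^sub>M S)"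
    using IH I by measurable
  from measurable_compose[OF this stp_meas[of "Suc n"]]
  show ?case by (simp only: hb_Suc) simp
qed

lemma restr_meas: "(\<lambda>\<omega>. restrict (\<lambda>i. \<xi> i \<omega>) J) \<in> measurable P (PiM J (\<lambda>_. S))" if "J \<subseteq> {1..}"
  using that by (intro measurable_restrict xi_rv) auto

lemma X_meas[measurable]: "(\<lambda>\<omega>. hb_state TYPE('n) DG \<alpha> \<epsilon> \<xi> \<theta>1 v0 n \<omega>) \<in> borel_measurable P"
proof -
  have "(\<lambda>\<omega>. hb_state TYPE('n) DG \<alpha> \<epsilon> (\<lambda>i f. f i) \<theta>1 v0 n (restrict (\<lambda>i. \<xi> i \<omega>) {1..n})) \<in> borel_measurable P"
    using measurable_compose[OF restr_meas[of "{1..n}"] hb_vec_meas[of n "{1..n}"]] by auto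
  then show ?thesis by (simp only: hb_restrict[of n "{1..n}", symmetric, OF order_refl])
qed

lemma u_step:
  "(\<integral>\<^sup>+\<omega>. ennreal (Lf (hb_state TYPE('n) DG \<alpha> \<epsilon> \<xi> \<theta>1 v0 (Suc n) \<omega>)) \<partial>P)
    \<le> ennreal (1 + acoef * (\<epsilon> (Suc n))^2) * (\<integral>\<^sup>+\<omega>. ennreal (Lf (hb_state TYPE('n) DG \<alpha> \<epsilon> \<xi> \<theta>1 v0 n \<omega>)) \<partial>P)
      + ennreal (bcoef * (\<epsilon> (Suc n))^2)"
proof -
  interpret prob_space P by (rule prob)
  define A where "A = PiM {1..n} (\<lambda>_::nat. S)"
  define B where "B = PiM {Suc n} (\<lambda>_::nat. S)"
  define X where "X \<omega> = restrict (\<lambda>i. \<xi> i \<omega>) {1..n}" for \<omega>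
  define Y where "Y \<omega> = restrict (\<lambda>i. \<xi> i \<omega>) {Suc n}" for \<omega>
  define \<Phi> where "\<Phi> f = hb_state TYPE('n) DG \<alpha> \<epsilon> (\<lambda>i f. f i) \<theta>1 v0 n f" for f
  have ind: "indep_var A X B Y"
    unfolding A_def B_def X_def[abs_def] Y_def[abs_def]
    by (rule indep_var_restrict[OF xi_indep]) auto
  have Xm[measurable]: "X \<in> measurable P A" unfolding A_def X_def[abs_def] by (rule restr_meas) auto
  have Ym[measurable]: "Y \<in> measurable P B" unfolding B_def Y_def[abs_def] by (rule restr_meas) auto
  have Phim[measurable]: "\<Phi> \<in> borel_measurable A" unfolding A_def \<Phi>_def[abs_def] by (rule hb_vec_meas) simp
  have compm[measurable]: "(\<lambda>f. f (Suc n)) \<in> measurable B S" unfolding B_def by measurable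
  have PhiX: "\<Phi> (X \<omega>) = hb_state TYPE('n) DG \<alpha> \<epsilon> \<xi> \<theta>1 v0 n \<omega>" for \<omega>
    unfolding \<Phi>_def X_def by (rule hb_restrict[symmetric]) simp
  have YS: "Y \<omega> (Suc n) = \<xi> (Suc n) \<omega>" for \<omega> by (simp add: Y_def)
  have deq: "distr P A X \<Otimes>\<^sub>M distr P B Y = distr P (A \<Otimes>\<^sub>M B) (\<lambda>x. (X x, Y x))"
    using ind by (simp add: indep_var_distribution_eq)
  interpret DX: prob_space "distr P A X" by (rule prob_space_distr) simp
  interpret DY: prob_space "distr P B Y" by (rule prob_space_distr) simp
  interpret PP: pair_prob_space "distr P A X" "distr P B Y" ..
  define f where "f p = ennreal (Lf (stp (Suc n) (\<Phi> (fst p)) (snd p (Suc n))))" for p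
  have fm[measurable]: "f \<in> borel_measurable (A \<Otimes>\<^sub>M B)"
  proof -
    have "(\<lambda>p. (\<Phi> (fst p), snd p (Suc n))) \<in> measurable (A \<Otimes>\<^sub>M B) (borel \<Otimes>\<^sub>M S)" by measurable
    from measurable_compose[OF measurable_compose[OF this stp_meas] Lf_meas]
    show ?thesis unfolding f_def by (simp add: case_prod_beta)
  qed
  have "(\<integral>\<^sup>+\<omega>. ennreal (Lf (hb_state TYPE('n) DG \<alpha> \<epsilon> \<xi> \<theta>1 v0 (Suc n) \<omega>)) \<partial>P) = (\<integral>\<^sup>+\<omega>. f (X \<omega>, Y \<omega>) \<partial>P)"
    by (simp only: hb_Suc) (simp add: f_def PhiX YS)
  also have "\<dots> = (\<integral>\<^sup>+p. f p \<partial>distr P (A \<Otimes>\<^sub>M B) (\<lambda>x. (X x, Y x)))"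
    by (rule nn_integral_distr[symmetric]) measurable
  also have "\<dots> = (\<integral>\<^sup>+p. f p \<partial>(distr P A X \<Otimes>\<^sub>M distr P B Y))" by (simp only: deq)
  also have "\<dots> = (\<integral>\<^sup>+x. \<integral>\<^sup>+y. f (x, y) \<partial>distr P B Y \<partial>distr P A X)"
    by (rule DY.nn_integral_fst[symmetric]) simp
  also have "\<dots> \<le> (\<integral>\<^sup>+x. ennreal ((1 + acoef * (\<epsilon> (Suc n))^2) * Lf (\<Phi> x) + bcoef * (\<epsilon> (Suc n))^2) \<partial>distr P A X)"
  proof (rule nn_integral_mono)
    fix x
    have "(\<integral>\<^sup>+y. f (x, y) \<partial>distr P B Y) = (\<integral>\<^sup>+\<omega>. ennreal (Lf (stp (Suc n) (\<Phi> x) (\<xi> (Suc n) \<omega>))) \<partial>P)"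
      by (subst nn_integral_distr) (auto simp: f_def YS)
    also have "\<dots> = (\<integral>\<^sup>+s. ennreal (Lf (stp (Suc n) (\<Phi> x) s)) \<partial>mu (Suc n))"
    proof -
      have m1: "\<xi> (Suc n) \<in> measurable P S" by (rule xi_rv) simp
      have "(\<lambda>s. ((\<Phi> x), s)) \<in> measurable S (borel \<Otimes>\<^sub>M S)" by measurable
      from measurable_compose[OF measurable_compose[OF this stp_meas] Lf_meas]
      have m2: "(\<lambda>s. ennreal (Lf (stp (Suc n) (\<Phi> x) s))) \<in> borel_measurable S" by simp
      then have m2': "(\<lambda>s. ennreal (Lf (stp (Suc n) (\<Phi> x) s))) \<in> borel_measurable (distr P S (\<xi> (Suc n)))" by simp
      show ?thesis unfolding mu_def by (simp only: nn_integral_distr[OF m1 m2'])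
    qed
    also have "\<dots> \<le> ennreal ((1 + acoef * (\<epsilon> (Suc n))^2) * Lf (\<Phi> x) + bcoef * (\<epsilon> (Suc n))^2)"
      by (rule onestep) simp
    finally show "(\<integral>\<^sup>+y. f (x, y) \<partial>distr P B Y) \<le> ennreal ((1 + acoef * (\<epsilon> (Suc n))^2) * Lf (\<Phi> x) + bcoef * (\<epsilon> (Suc n))^2)" .
  qed
  also have "\<dots> = (\<integral>\<^sup>+\<omega>. ennreal ((1 + acoef * (\<epsilon> (Suc n))^2) * Lf (\<Phi> (X \<omega>)) + bcoef * (\<epsilon> (Suc n))^2) \<partial>P)"
    by (rule nn_integral_distr) measurable
  also have "\<dots> = (\<integral>\<^sup>+\<omega>. ennreal (1 + acoef * (\<epsilon> (Suc n))^2) * ennreal (Lf (hb_state TYPE('n) DG \<alpha> \<epsilon> \<xi> \<theta>1 v0 n \<omega>)) + ennreal (bcoef * (\<epsilon> (Suc n))^2) \<partial>P)"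
    using acoef_nn bcoef_nn Lf_nn
    by (intro nn_integral_cong) (simp add: ennreal_plus ennreal_mult PhiX)
  also have "\<dots> = ennreal (1 + acoef * (\<epsilon> (Suc n))^2) * (\<integral>\<^sup>+\<omega>. ennreal (Lf (hb_state TYPE('n) DG \<alpha> \<epsilon> \<xi> \<theta>1 v0 n \<omega>)) \<partial>P) + ennreal (bcoef * (\<epsilon> (Suc n))^2)"
    by (subst nn_integral_add) (auto simp: nn_integral_cmult emeasure_space_1)
  finally show ?thesis .
qed

end

context hb begin

lemma C1_nn: "C1 \<ge> 0" using c_pos by (auto simp: C1_def intro!: add_nonneg_nonneg)

lemma final_bound: "\<exists>T::real. \<forall>n\<ge>1. (\<integral>\<^sup>+ \<omega>. ennreal (g (hb_theta DG \<alpha> \<epsilon> \<xi> \<theta>1 v0 n \<omega>)) \<partial>P) < ennreal T"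
proof -
  interpret prob_space P by (rule prob)
  define u where "u n = (\<integral>\<^sup>+\<omega>. ennreal (Lf (hb_state TYPE('n) DG \<alpha> \<epsilon> \<xi> \<theta>1 v0 n \<omega>)) \<partial>P)" for n
  define L0 where "L0 = Lf (\<theta>1, v0)"
  define Sf where "Sf = suminf (\<lambda>k. (\<epsilon> k)^2)"
  define Sn where "Sn n = (\<Sum>k<n. (\<epsilon> (Suc k))^2)" for n
  define Bn where "Bn n = exp (acoef * Sn n) * (L0 + bcoef * Sn n)" for n
  have L0_nn: "L0 \<ge> 0" by (simp add: L0_def Lf_nn)
  have Sn_nn: "Sn n \<ge> 0" for n by (simp add: Sn_def sum_nonneg)
  have Sn_le: "Sn n \<le> Sf" for n
  proof -
    have "Sn n \<le> (\<epsilon> 0)^2 + Sn n" by simp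
    also have "\<dots> = (\<Sum>k<Suc n. (\<epsilon> k)^2)" unfolding Sn_def by (rule sum.lessThan_Suc_shift[symmetric])
    also have "\<dots> \<le> Sf" unfolding Sf_def by (rule sum_le_suminf[OF eps_sq]) auto
    finally show ?thesis .
  qed
  have u0: "u 0 = ennreal L0" by (simp add: u_def L0_def emeasure_space_1)
  have ub: "u n \<le> ennreal (Bn n)" for n
  proof (induction n)
    case 0 then show ?case by (simp add: u0 Bn_def Sn_def)
  next
    case (Suc n)
    define e2 where "e2 = (\<epsilon> (Suc n))^2"
    have e2_nn: "e2 \<ge> 0" by (simp add: e2_def)
    have "u (Suc n) \<le> ennreal (1 + acoef * e2) * u n + ennreal (bcoef * e2)"
      unfolding u_def e2_def by (rule u_step)
    also have "\<dots> \<le> ennreal (1 + acoef * e2) * ennreal (Bn n) + ennreal (bcoef * e2)"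
      by (intro add_right_mono mult_left_mono Suc.IH) auto
    also have "\<dots> = ennreal ((1 + acoef * e2) * Bn n + bcoef * e2)"
      using acoef_nn bcoef_nn e2_nn L0_nn Sn_nn[of n]
      by (simp add: ennreal_plus ennreal_mult Bn_def)
    also have "(1 + acoef * e2) * Bn n + bcoef * e2 \<le> Bn (Suc n)"
    proof -
      have SS: "Sn (Suc n) = Sn n + e2" by (simp add: Sn_def e2_def)
      have Bpos: "L0 + bcoef * Sn n \<ge> 0" using L0_nn bcoef_nn Sn_nn[of n] by simp
      have m1: "(1 + acoef * e2) * exp (acoef * Sn n) \<le> exp (acoef * e2) * exp (acoef * Sn n)"
        by (intro mult_right_mono) auto
      have "(1 + acoef * e2) * Bn n = ((1 + acoef * e2) * exp (acoef * Sn n)) * (L0 + bcoef * Sn n)"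
        by (simp add: Bn_def mult.assoc)
      also have "\<dots> \<le> (exp (acoef * e2) * exp (acoef * Sn n)) * (L0 + bcoef * Sn n)"
        by (rule mult_right_mono[OF m1 Bpos])
      also have "exp (acoef * e2) * exp (acoef * Sn n) = exp (acoef * Sn (Suc n))"
        by (simp add: SS exp_add[symmetric] distrib_left add.commute)
      finally have i1: "(1 + acoef * e2) * Bn n \<le> exp (acoef * Sn (Suc n)) * (L0 + bcoef * Sn n)" .
      have "1 \<le> exp (acoef * Sn (Suc n))" using acoef_nn Sn_nn[of "Suc n"] by simp
      then have i2: "bcoef * e2 \<le> exp (acoef * Sn (Suc n)) * (bcoef * e2)"
        using bcoef_nn e2_nn mult_right_mono[of 1 "exp (acoef * Sn (Suc n))" "bcoef * e2"] by simp
      have "Bn (Suc n) = exp (acoef * Sn (Suc n)) * (L0 + bcoef * Sn n) + exp (acoef * Sn (Suc n)) * (bcoef * e2)"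
        by (simp add: Bn_def SS algebra_simps)
      then show ?thesis using i1 i2 by linarith
    qed
    finally show ?case by (simp add: ennreal_leI)
  qed
  define Bf where "Bf = exp (acoef * Sf) * (L0 + bcoef * Sf)"
  have Bn_le: "Bn n \<le> Bf" for n
  proof -
    have a: "acoef * Sn n \<le> acoef * Sf" by (rule mult_left_mono[OF Sn_le acoef_nn])
    have b: "bcoef * Sn n \<le> bcoef * Sf" by (rule mult_left_mono[OF Sn_le bcoef_nn])
    show ?thesis unfolding Bn_def Bf_def using a b L0_nn bcoef_nn Sn_nn[of n]
      by (intro mult_mono) auto
  qed
  have Bf_nn: "Bf \<ge> 0" using L0_nn bcoef_nn Sn_le[of 0] Sn_nn[of 0] by (simp add: Bf_def)
  show ?thesis
  proof (intro exI allI impI)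
    fix n :: nat assume n: "n \<ge> 1"
    have "(\<integral>\<^sup>+ \<omega>. ennreal (g (hb_theta DG \<alpha> \<epsilon> \<xi> \<theta>1 v0 n \<omega>)) \<partial>P)
        \<le> (\<integral>\<^sup>+ \<omega>. ennreal C1 * ennreal (Lf (hb_state TYPE('n) DG \<alpha> \<epsilon> \<xi> \<theta>1 v0 (n - 1) \<omega>)) \<partial>P)"
    proof (rule nn_integral_mono)
      fix \<omega>
      have "g (fst (hb_state TYPE('n) DG \<alpha> \<epsilon> \<xi> \<theta>1 v0 (n - 1) \<omega>)) \<le> C1 * Lf (hb_state TYPE('n) DG \<alpha> \<epsilon> \<xi> \<theta>1 v0 (n - 1) \<omega>)"
        by (rule g_theta_bound)
      then have "ennreal (g (fst (hb_state TYPE('n) DG \<alpha> \<epsilon> \<xi> \<theta>1 v0 (n - 1) \<omega>))) \<le> ennreal (C1 * Lf (hb_state TYPE('n) DG \<alpha> \<epsilon> \<xi> \<theta>1 v0 (n - 1) \<omega>))"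
        by (rule ennreal_leI)
      also have "\<dots> = ennreal C1 * ennreal (Lf (hb_state TYPE('n) DG \<alpha> \<epsilon> \<xi> \<theta>1 v0 (n - 1) \<omega>))"
        using C1_nn Lf_nn by (simp add: ennreal_mult)
      finally show "ennreal (g (hb_theta DG \<alpha> \<epsilon> \<xi> \<theta>1 v0 n \<omega>)) \<le> ennreal C1 * ennreal (Lf (hb_state TYPE('n) DG \<alpha> \<epsilon> \<xi> \<theta>1 v0 (n - 1) \<omega>))"
        by (simp add: hb_theta_def)
    qed
    also have "\<dots> = ennreal C1 * u (n - 1)" by (simp add: u_def nn_integral_cmult)
    also have "\<dots> \<le> ennreal C1 * ennreal Bf"
      using ub[of "n - 1"] Bn_le[of "n - 1"] by (intro mult_left_mono) (auto intro: order_trans ennreal_leI)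
    also have "\<dots> = ennreal (C1 * Bf)" using C1_nn Bf_nn by (simp add: ennreal_mult)
    also have "\<dots> < ennreal (C1 * Bf + 1)" using C1_nn Bf_nn by (simp add: ennreal_less_iff)
    finally show "(\<integral>\<^sup>+ \<omega>. ennreal (g (hb_theta DG \<alpha> \<epsilon> \<xi> \<theta>1 v0 n \<omega>)) \<partial>P) < ennreal (C1 * Bf + 1)" .
  qed
qed

end


theorem lemma1:
  fixes P :: "'a measure" and S :: "'b measure"
    and \<xi> :: "nat \<Rightarrow> 'a \<Rightarrow> 'b"
    and g :: "real^'n::finite \<Rightarrow> real" and Dg :: "real^'n \<Rightarrow> real^'n"
    and G :: "real^'n \<Rightarrow> 'b \<Rightarrow> real" and DG :: "real^'n \<Rightarrow> 'b \<Rightarrow> real^'n"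
    and \<alpha> :: real and \<epsilon> :: "nat \<Rightarrow> real" and c K :: real
  assumes prob: "prob_space P"
    and xi_rv: "\<And>n. n \<ge> 1 \<Longrightarrow> \<xi> n \<in> measurable P S"
    and xi_indep: "prob_space.indep_vars P (\<lambda>_. S) \<xi> {1..}"
    and G_meas: "\<And>x. (\<lambda>s. G x s) \<in> borel_measurable S"
    and DG_meas: "(\<lambda>(x, s). DG x s) \<in> borel_measurable (borel \<Otimes>\<^sub>M S)"
    and G_diff: "\<And>x s. s \<in> space S \<Longrightarrow> GDERIV (\<lambda>y. G y s) x :> DG x s"
    and G_integrable: "\<And>x n. n \<ge> 1 \<Longrightarrow> integrable P (\<lambda>\<omega>. G x (\<xi> n \<omega>))"
    and unbiased: "\<And>x n. n \<ge> 1 \<Longrightarrow> g x = (\<integral>\<omega>. G x (\<xi> n \<omega>) \<partial>P)"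
    and g_nonneg: "\<And>x. g x \<ge> 0"
    and g_grad: "\<And>x. GDERIV g x :> Dg x"
    and Dg_cont: "continuous_on UNIV Dg"
    and J_nonempty: "{\<theta>. Dg \<theta> = 0} \<noteq> {}"
    and c_pos: "c > 0"
    and Lipschitz: "\<And>x y. norm (Dg x - Dg y) \<le> c * norm (x - y)"
    and K_pos: "K > 0"
    and variance: "\<And>\<theta> n. n \<ge> 1 \<Longrightarrow>
        (\<integral>\<^sup>+ \<omega>. ennreal ((norm (Dg \<theta> - DG \<theta> (\<xi> n \<omega>)))\<^sup>2) \<partial>P) \<le> ennreal (K * (1 + g \<theta>))"
    and alpha: "0 \<le> \<alpha>" "\<alpha> < 1"
    and eps_pos: "\<And>n. n \<ge> 1 \<Longrightarrow> \<epsilon> n > 0"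
    and eps_mono: "\<And>m n. 1 \<le> m \<Longrightarrow> m \<le> n \<Longrightarrow> \<epsilon> n \<le> \<epsilon> m"
    and eps_lim: "\<epsilon> \<longlonglongrightarrow> 0"
    and eps_div: "\<not> summable \<epsilon>"
    and eps_sq: "summable (\<lambda>n. (\<epsilon> n)\<^sup>2)"
  shows "\<forall>\<theta>1 v0. \<exists>T::real. \<forall>n\<ge>1.
           (\<integral>\<^sup>+ \<omega>. ennreal (g (hb_theta DG \<alpha> \<epsilon> \<xi> \<theta>1 v0 n \<omega>)) \<partial>P) < ennreal T"
proof -
  interpret hb P S \<xi> g Dg G DG \<alpha> \<epsilon> c K
    by (rule hb.intro[OF prob xi_rv xi_indep G_meas DG_meas G_diff G_integrable unbiased g_nonneg
        g_grad Dg_cont J_nonempty c_pos Lipschitz K_pos variance alpha eps_pos eps_mono eps_lim eps_div eps_sq])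
  show ?thesis using final_bound by blast
qed

end
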